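(* Let $d,n\ge 1$, $\gamma\in[0,1)$, $\alpha>0$, and $D=3d+2$. Let $\mathbf P,\mathbf V\in\mathbb R^{D\times D}$ be partitioned as $\mathbf P=\begin{bmatrix}\mathbf P_{11}&\mathbf P_{12}\\ \mathbf P_{21}&\mathbf P_{22}\end{bmatrix}$, $\mathbf V=\begin{bmatrix}\mathbf V_{11}&\mathbf V_{12}\\ \mathbf V_{21}&\mathbf V_{22}\end{bmatrix}$ with $\mathbf P_{11},\mathbf V_{11}\in\mathbb R^{(2d+1)\times(2d+1)}$, $\mathbf P_{12},\mathbf V_{12}\in\mathbb R^{(2d+1)\times(d+1)}$, $\mathbf P_{21},\mathbf V_{21}\in\mathbb R^{(d+1)\times(2d+1)}$, $\mathbf P_{22},\mathbf V_{22}\in\mathbb R^{(d+1)\times(d+1)}$, and suppose $$\mathbf P_{12}=\begin{bmatrix}\mathbf 0_{d\times1}&-\mathbf I_d\\ \mathbf 0_{d\times1}&\mathbf I_d\\ 1&\mathbf 0_{1\times d}\end{bmatrix},\quad \mathbf P_{22}=\mathbf 0,$$ the last $d$ rows of $\mathbf V_{21}$ equal $[\alpha\mathbf I_d\;\;\mathbf 0_{d\times d}\;\;\mathbf 0_{d\times1}]$, and the last $d$ rows of $\mathbf V_{22}$ are zero, while $\mathbf P_{11},\mathbf P_{21},\mathbf V_{11},\mathbf V_{12}$ and the first rows of $\mathbf V_{21},\mathbf V_{22}$ are arbitrary. Then for every $c\neq 0$ and every sample $z$ (any feature map, any $\mathbf w\in\mathbb R^d$, any $n$-step trajectory), the transformer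 with parameters $(c\mathbf P,c^{-1}\mathbf V)$ satisfies $\mathsf{TF}_{(c\mathbf P,c^{-1}\mathbf V)}(\mathbf H(z))=\mathbf w_{\mathrm{SARSA}}(z)$.
   Context: A linear self-attention block with parameters $(\mathbf P,\mathbf V)$, $\mathbf P,\mathbf V\in\mathbb R^{D\times D}$, maps an input $\mathbf H\in\mathbb R^{D\times N}$ to $\mathbf H_{\mathrm{out}}=\mathbf H+\frac1n(\mathbf V\mathbf H)(\mathbf H^\top\mathbf P\mathbf H)$, where $n$ is the trajectory length below; the transformer output $\mathsf{TF}_{(\mathbf P,\mathbf V)}(\mathbf H)$ is the vector of the last $d$ entries of the last column of $\mathbf H_{\mathrm{out}}$. A sample $z$ consists of a feature map $\boldsymbol\phi:\mathcal S\times\mathcal A\to\mathbb R^d$, a parameter $\mathbf w\in\mathbb R^d$, and an $n$-step trajectory $(s_0,a_0,r_1,s_1,a_1,\dots,r_n,s_n,a_n)$ with real rewards. Set $\boldsymbol\phi_i=\boldsymbol\phi(s_i,a_i)$, $\boldsymbol\phi_i^+=\boldsymbol\phi(s_{i+1},a_{i+1})$, $\delta_i=r_{i+1}+\gamma\mathbf w^\top\boldsymbol\phi_i^+-\mathbf w^\top\boldsymbol\phi_i$, $\mathbf x_i=[\boldsymbol\phi_i;\gamma\boldsymbol\phi_i^+;r_{i+1}]\in\mathbb R^{2d+1}$ for $i=0,\dots,n-1$, and $\tilde{\mathbf w}=[1;\mathbf w]\in\mathbb R^{d+1}$. The prompt is $\mathbf H(z)=\begin{bmatrix}\mathbf x_0&\cdots&\mathbf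 x_{n-1}&\mathbf 0\\ \mathbf 0&\cdots&\mathbf 0&\tilde{\mathbf w}\end{bmatrix}\in\mathbb R^{D\times(n+1)}$. The batch semi-gradient SARSA update is $\mathbf w_{\mathrm{SARSA}}(z)=\mathbf w+\frac{\alpha}{n}\sum_{i=0}^{n-1}\delta_i\boldsymbol\phi_i$. *)

theory Defs
  imports "Jordan_Normal_Form.Matrix"
begin

definition emb_dim :: "nat \<Rightarrow> nat" where
  "emb_dim d = 3 * d + 2"

(* The prescribed block P12 in R^{(2d+1) x (d+1)} (0-indexed rows/cols):
   rows 0..d-1  : [0, -I_d];  rows d..2d-1 : [0, I_d];  row 2d : [1, 0] *)
definition P12_blk :: "nat \<Rightarrow> real mat" where
  "P12_blk d = mat (2 * d + 1) (d + 1) (\<lambda>(i, j).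
     if j = 0 then (if i = 2 * d then 1 else 0)
     else if i < d \<and> j = i + 1 then -1
     else if d \<le> i \<and> i < 2 * d \<and> j = i - d + 1 then 1
     else 0)"

definition lsa_out :: "nat \<Rightarrow> real mat \<Rightarrow> real mat \<Rightarrow> real mat \<Rightarrow> real mat" where
  "lsa_out n P V H = H + (1 / real n) \<cdot>\<^sub>m ((V * H) * (transpose_mat H * P * H))"

definition TF :: "nat \<Rightarrow> nat \<Rightarrow> real mat \<Rightarrow> real mat \<Rightarrow> real mat \<Rightarrow> real vec" where
  "TF d n P V H = (let Ho = lsa_out n P V H in
     vec d (\<lambda>k. Ho $$ (dim_row Ho - d + k, dim_col Ho - 1)))"

definition feat :: "('s \<Rightarrow> 'a \<Rightarrow> real vec) \<Rightarrow> (nat \<Rightarrow> 's) \<Rightarrow> (nat \<Rightarrow> 'a) \<Rightarrow> nat \<Rightarrow> real vec" where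
  "feat phi s a i = phi (s i) (a i)"

definition xvec :: "real \<Rightarrow> ('s \<Rightarrow> 'a \<Rightarrow> real vec) \<Rightarrow> (nat \<Rightarrow> 's) \<Rightarrow> (nat \<Rightarrow> 'a)
    \<Rightarrow> (nat \<Rightarrow> real) \<Rightarrow> nat \<Rightarrow> real vec" where
  "xvec \<gamma> phi s a r i =
     feat phi s a i @\<^sub>v (\<gamma> \<cdot>\<^sub>v feat phi s a (Suc i)) @\<^sub>v vec_of_list [r (Suc i)]"

definition prompt :: "nat \<Rightarrow> nat \<Rightarrow> real \<Rightarrow> ('s \<Rightarrow> 'a \<Rightarrow> real vec) \<Rightarrow> real vec
    \<Rightarrow> (nat \<Rightarrow> 's) \<Rightarrow> (nat \<Rightarrow> 'a) \<Rightarrow> (nat \<Rightarrow> real) \<Rightarrow> real mat" where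
  "prompt d n \<gamma> phi w s a r =
     four_block_mat
       (mat_of_cols (2 * d + 1) (map (xvec \<gamma> phi s a r) [0..<n])) (0\<^sub>m (2 * d + 1) 1)
       (0\<^sub>m (d + 1) n) (mat_of_cols (d + 1) [vec_of_list [1] @\<^sub>v w])"

definition td_err :: "real \<Rightarrow> ('s \<Rightarrow> 'a \<Rightarrow> real vec) \<Rightarrow> real vec
    \<Rightarrow> (nat \<Rightarrow> 's) \<Rightarrow> (nat \<Rightarrow> 'a) \<Rightarrow> (nat \<Rightarrow> real) \<Rightarrow> nat \<Rightarrow> real" where
  "td_err \<gamma> phi w s a r i =
     r (Suc i) + \<gamma> * (w \<bullet> feat phi s a (Suc i)) - w \<bullet> feat phi s a i"

definition w_sarsa :: "nat \<Rightarrow> nat \<Rightarrow> real \<Rightarrow> real \<Rightarrow> ('s \<Rightarrow> 'a \<Rightarrow> real vec) \<Rightarrow> real vec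
    \<Rightarrow> (nat \<Rightarrow> 's) \<Rightarrow> (nat \<Rightarrow> 'a) \<Rightarrow> (nat \<Rightarrow> real) \<Rightarrow> real vec" where
  "w_sarsa d n \<alpha> \<gamma> phi w s a r =
     vec d (\<lambda>k. w $ k + \<alpha> / real n *
        (\<Sum>i<n. td_err \<gamma> phi w s a r i * (feat phi s a i $ k)))"

end

theory Submission
  imports Defs
begin

lemma xvec_carrier:
  assumes "\<And>x y. phi x y \<in> carrier_vec d"
  shows "xvec \<gamma> phi s a r i \<in> carrier_vec (2*d+1)"
proof -
  have "dim_vec (phi x y) = d" for x y using assms[of x y] by (simp add: carrier_vecD)
  thus ?thesis unfolding xvec_def feat_def by (intro carrier_vecI) simp
qed

lemma P12_carrier: "P12_blk d \<in> carrier_mat (2*d+1) (d+1)"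
  unfolding P12_blk_def by simp

lemma P12_idx0: "i < 2*d+1 \<Longrightarrow> P12_blk d $$ (i,0) = (if i = 2*d then 1 else 0)"
  unfolding P12_blk_def by simp

lemma P12_idxS: "i < 2*d+1 \<Longrightarrow> t < d \<Longrightarrow> P12_blk d $$ (i,Suc t) =
   (if i < d \<and> t = i then -1 else if d \<le> i \<and> i < 2*d \<and> t = i - d then 1 else 0)"
  unfolding P12_blk_def by auto

lemma P12_mult:
  assumes w: "w \<in> carrier_vec d"
  shows "P12_blk d *\<^sub>v (vec_of_list [1] @\<^sub>v w) = (- w) @\<^sub>v (w @\<^sub>v vec_of_list [1])"
proof (rule eq_vecI)
  show "dim_vec (P12_blk d *\<^sub>v (vec_of_list [1] @\<^sub>v w)) = dim_vec ((- w) @\<^sub>v (w @\<^sub>v vec_of_list [1]))"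
    using w unfolding P12_blk_def by simp
  fix i assume "i < dim_vec ((- w) @\<^sub>v (w @\<^sub>v vec_of_list [1]))"
  hence i: "i < 2*d+1" using w by simp
  have "(P12_blk d *\<^sub>v (vec_of_list [1] @\<^sub>v w)) $ i
     = (\<Sum>t<Suc d. P12_blk d $$ (i,t) * (vec_of_list [1] @\<^sub>v w) $ t)"
    using i w unfolding P12_blk_def
    by (simp add: scalar_prod_def row_def atLeast0LessThan)
  also have "\<dots> = P12_blk d $$ (i,0) + (\<Sum>t<d. P12_blk d $$ (i,Suc t) * w $ t)"
    using w by (subst sum.lessThan_Suc_shift) simp
  also have "\<dots> = ((- w) @\<^sub>v (w @\<^sub>v vec_of_list [1])) $ i"
  proof -
    have "(\<Sum>t<d. P12_blk d $$ (i,Suc t) * w $ t) = (\<Sum>t<d.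
   (if i < d \<and> t = i then - w $ t else if d \<le> i \<and> i < 2*d \<and> t = i - d then w $ t else 0))"
      using i by (intro sum.cong) (auto simp: P12_idxS)
    also have "\<dots> = (if i < d then - w $ i else if d \<le> i \<and> i < 2*d then w $ (i-d) else 0)"
    proof (cases "i < d")
      case True
      hence "(\<Sum>t<d. (if i < d \<and> t = i then - w $ t else if d \<le> i \<and> i < 2*d \<and> t = i - d then w $ t else 0))
         = (\<Sum>t<d. (if t = i then - w $ t else 0))" by (intro sum.cong) auto
      thus ?thesis using True by (simp add: sum.delta)
    qed (auto simp: sum.delta)
    finally show ?thesis using i w by (auto simp: P12_idx0)
  qed
  finally show "(P12_blk d *\<^sub>v (vec_of_list [1] @\<^sub>v w)) $ i = ((- w) @\<^sub>v (w @\<^sub>v vec_of_list [1])) $ i" .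
qed

theorem theorem1:
  fixes d n :: nat and \<gamma> \<alpha> c :: real
    and P V P11 P21 V11 V12 V21 V22 :: "real mat"
    and phi :: "'s \<Rightarrow> 'a \<Rightarrow> real vec" and w :: "real vec"
    and s :: "nat \<Rightarrow> 's" and a :: "nat \<Rightarrow> 'a" and r :: "nat \<Rightarrow> real"
  assumes "d \<ge> 1" and "n \<ge> 1" and "0 \<le> \<gamma>" and "\<gamma> < 1" and "\<alpha> > 0"
    and "P11 \<in> carrier_mat (2 * d + 1) (2 * d + 1)"
    and "P21 \<in> carrier_mat (d + 1) (2 * d + 1)"
    and "P = four_block_mat P11 (P12_blk d) P21 (0\<^sub>m (d + 1) (d + 1))"
    and "V11 \<in> carrier_mat (2 * d + 1) (2 * d + 1)"
    and "V12 \<in> carrier_mat (2 * d + 1) (d + 1)"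
    and "V21 \<in> carrier_mat (d + 1) (2 * d + 1)"
    and "V22 \<in> carrier_mat (d + 1) (d + 1)"
    and "\<And>k j. k < d \<Longrightarrow> j < 2 * d + 1 \<Longrightarrow> V21 $$ (k + 1, j) = (if j = k then \<alpha> else 0)"
    and "\<And>k j. k < d \<Longrightarrow> j < d + 1 \<Longrightarrow> V22 $$ (k + 1, j) = 0"
    and "V = four_block_mat V11 V12 V21 V22"
    and "c \<noteq> 0"
    and "\<And>x y. phi x y \<in> carrier_vec d"
    and "w \<in> carrier_vec d"
  shows "TF d n (c \<cdot>\<^sub>m P) (inverse c \<cdot>\<^sub>m V) (prompt d n \<gamma> phi w s a r)
           = w_sarsa d n \<alpha> \<gamma> phi w s a r"
proof -
  note P11 = assms(6) and P21 = assms(7) and Pdef = assms(8)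
  note V11 = assms(9) and V12 = assms(10) and V21 = assms(11) and V22 = assms(12)
  note V21e = assms(13) and Vdef = assms(15) and phiC = assms(17) and wC = assms(18)
  define xs where "xs = map (xvec \<gamma> phi s a r) [0..<n]"
  define X where "X = mat_of_cols (2 * d + 1) xs"
  define wt where "wt = vec_of_list [1] @\<^sub>v w"
  define Wc where "Wc = mat_of_cols (d + 1) [wt]"
  define H where "H = prompt d n \<gamma> phi w s a r"
  have P12: "P12_blk d \<in> carrier_mat (2*d+1) (d+1)" by (rule P12_carrier)
  have X: "X \<in> carrier_mat (2*d+1) n" unfolding X_def xs_def using mat_of_cols_carrier(1)[of "2*d+1" "map (xvec \<gamma> phi s a r) [0..<n]"] by simp
  have wt: "wt \<in> carrier_vec (d+1)" unfolding wt_def using wC by simp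
  have Wc: "Wc \<in> carrier_mat (d+1) 1" unfolding Wc_def using mat_of_cols_carrier(1)[of "d+1" "[wt]"] by simp
  have Hdef: "H = four_block_mat X (0\<^sub>m (2 * d + 1) 1) (0\<^sub>m (d + 1) n) Wc"
    unfolding H_def prompt_def X_def xs_def Wc_def wt_def by simp
  have H: "H \<in> carrier_mat (3*d+2) (n+1)" unfolding Hdef using X Wc by auto
  have P: "P \<in> carrier_mat (3*d+2) (3*d+2)" unfolding Pdef using P11 by auto
  have V: "V \<in> carrier_mat (3*d+2) (3*d+2)" unfolding Vdef using V11 V22 by auto
  have scal: "(inverse c \<cdot>\<^sub>m V) * H * (transpose_mat H * (c \<cdot>\<^sub>m P) * H) = V * H * (transpose_mat H * P * H)"
  proof -
    have "(inverse c \<cdot>\<^sub>m V) * H = inverse c \<cdot>\<^sub>m (V * H)" using V H by (rule mult_smult_assoc_mat)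
    moreover have "transpose_mat H * (c \<cdot>\<^sub>m P) = c \<cdot>\<^sub>m (transpose_mat H * P)"
      using H P by (intro mult_smult_distrib) auto
    moreover have "(c \<cdot>\<^sub>m (transpose_mat H * P)) * H = c \<cdot>\<^sub>m (transpose_mat H * P * H)"
      using H P by (intro mult_smult_assoc_mat) auto
    moreover have "(inverse c \<cdot>\<^sub>m (V * H)) * (c \<cdot>\<^sub>m (transpose_mat H * P * H))
        = inverse c \<cdot>\<^sub>m (c \<cdot>\<^sub>m ((V * H) * (transpose_mat H * P * H)))"
    proof -
      have A: "V * H \<in> carrier_mat (3*d+2) (n+1)" using V H by auto
      have B: "transpose_mat H * P * H \<in> carrier_mat (n+1) (n+1)" using P H by auto
      show ?thesis using mult_smult_assoc_mat[OF A smult_carrier_mat[OF B]] mult_smult_distrib[OF A B]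
        by metis
    qed
    ultimately have "(inverse c \<cdot>\<^sub>m V) * H * (transpose_mat H * (c \<cdot>\<^sub>m P) * H)
       = inverse c \<cdot>\<^sub>m (c \<cdot>\<^sub>m ((V * H) * (transpose_mat H * P * H)))" by simp
    also have "\<dots> = (V * H) * (transpose_mat H * P * H)"
      using assms(16) by (intro eq_matI) auto
    finally show ?thesis .
  qed
  have VH: "V * H = four_block_mat (V11 * X) (V12 * Wc) (V21 * X) (V22 * Wc)"
    unfolding Vdef Hdef
    by (subst mult_four_block_mat[OF V11 V12 V21 V22 X _ _ Wc]) (use X Wc V11 V12 V21 V22 in auto)
  have HT: "transpose_mat H = four_block_mat (transpose_mat X) (0\<^sub>m n (d+1)) (0\<^sub>m 1 (2*d+1)) (transpose_mat Wc)"
    unfolding Hdef using X Wc by (subst transpose_four_block_mat) auto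
  have HTP: "transpose_mat H * P = four_block_mat (transpose_mat X * P11) (transpose_mat X * P12_blk d)
      (transpose_mat Wc * P21) (0\<^sub>m 1 (d+1))"
    unfolding HT Pdef
    by (subst mult_four_block_mat[OF _ _ _ _ P11 P12 P21]) (use X Wc P11 P12 P21 in auto)
  have HTPH: "transpose_mat H * P * H = four_block_mat (transpose_mat X * P11 * X) (transpose_mat X * P12_blk d * Wc)
      (transpose_mat Wc * P21 * X) (0\<^sub>m 1 1)"
    unfolding HTP unfolding Hdef
    by (subst mult_four_block_mat[OF _ _ _ _ X _ _ Wc]) (use X Wc P11 P12 P21 in auto)
  define BR where "BR = V21 * X * (transpose_mat X * P12_blk d * Wc)"
  have M: "V * H * (transpose_mat H * P * H) = four_block_mat
      (V11 * X * (transpose_mat X * P11 * X) + V12 * Wc * (transpose_mat Wc * P21 * X))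
      (V11 * X * (transpose_mat X * P12_blk d * Wc))
      (V21 * X * (transpose_mat X * P11 * X) + V22 * Wc * (transpose_mat Wc * P21 * X))
      BR"
    unfolding VH HTPH BR_def
    by (subst mult_four_block_mat) (use X Wc P11 P12 P21 V11 V12 V21 V22 in auto)
  have dphi: "dim_vec (phi x y) = d" for x y using phiC[of x y] by (simp add: carrier_vecD)
  have xsj: "xs ! j = xvec \<gamma> phi s a r j" if "j < n" for j using that unfolding xs_def by simp
  have Xe: "X $$ (l, j) = xvec \<gamma> phi s a r j $ l" if "l < 2*d+1" "j < n" for l j
    using that unfolding X_def by (simp add: mat_of_cols_index xs_def)
  have xk: "xvec \<gamma> phi s a r j $ k = feat phi s a j $ k" if "k < d" for j k
    using that unfolding xvec_def feat_def by (simp add: dphi)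
  have VX: "(V21 * X) $$ (k+1, j) = \<alpha> * feat phi s a j $ k" if "k < d" "j < n" for k j
  proof -
    have "(V21 * X) $$ (k+1, j) = (\<Sum>l<2*d+1. V21 $$ (k+1, l) * X $$ (l, j))"
      using that V21 X by (simp add: scalar_prod_def row_def col_def atLeast0LessThan)
    also have "\<dots> = (\<Sum>l<2*d+1. (if l = k then \<alpha> * X $$ (k, j) else 0))"
    proof (intro sum.cong refl)
      fix l assume "l \<in> {..<2*d+1}"
      thus "V21 $$ (k+1, l) * X $$ (l, j) = (if l = k then \<alpha> * X $$ (k, j) else 0)"
        using V21e[of k l] that by auto
    qed
    also have "\<dots> = \<alpha> * X $$ (k, j)" using that by (simp add: sum.delta)
    finally show ?thesis using that by (simp add: Xe xk)
  qed
  have Te: "(transpose_mat X * P12_blk d * Wc) $$ (j, 0) = td_err \<gamma> phi w s a r j" if "j < n" for j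
  proof -
    have "(transpose_mat X * P12_blk d * Wc) = transpose_mat X * (P12_blk d * Wc)"
      using X P12 Wc by (simp add: assoc_mult_mat)
    hence "(transpose_mat X * P12_blk d * Wc) $$ (j, 0) = col X j \<bullet> (P12_blk d *\<^sub>v wt)"
    proof -
      have cw: "col Wc 0 = wt" unfolding Wc_def using wt by simp
      show ?thesis using that X P12 Wc by (simp add: cw mult_mat_vec_def)
    qed
    also have "\<dots> = xvec \<gamma> phi s a r j \<bullet> ((- w) @\<^sub>v (w @\<^sub>v vec_of_list [1]))"
    proof -
      have "col X j = xs ! j" unfolding X_def
        by (rule col_mat_of_cols) (use that xvec_carrier[OF phiC] in \<open>auto simp: xs_def\<close>)
      thus ?thesis using that unfolding wt_def P12_mult[OF wC] by (simp add: xs_def)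
    qed
    also have "\<dots> = td_err \<gamma> phi w s a r j"
    proof -
      define f0 where "f0 = feat phi s a j"
      define f1 where "f1 = feat phi s a (Suc j)"
      have f0: "f0 \<in> carrier_vec d" and f1: "f1 \<in> carrier_vec d"
        unfolding f0_def f1_def feat_def using phiC by auto
      have o: "vec_of_list [r (Suc j)] \<in> carrier_vec 1" "vec_of_list [1::real] \<in> carrier_vec 1" by auto
      have "xvec \<gamma> phi s a r j \<bullet> ((- w) @\<^sub>v (w @\<^sub>v vec_of_list [1]))
         = f0 \<bullet> (- w) + ((\<gamma> \<cdot>\<^sub>v f1) \<bullet> w + vec_of_list [r (Suc j)] \<bullet> vec_of_list [1])"
        unfolding xvec_def f0_def[symmetric] f1_def[symmetric]
        using f0 f1 wC o
        by (simp only: scalar_prod_append[of f0 d _ "d+1"] scalar_prod_append[of _ d _ 1]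
             smult_carrier_vec append_carrier_vec uminus_carrier_vec Nat.add_0_right[symmetric] add_Suc_right)
      also have "\<dots> = r (Suc j) + \<gamma> * (w \<bullet> f1) - w \<bullet> f0"
        using f0 f1 wC by (simp add: scalar_prod_def sum_negf sum_distrib_left mult_ac)
      finally show ?thesis unfolding td_err_def f0_def f1_def .
    qed
    finally show ?thesis .
  qed
  have BRe: "BR $$ (k+1, 0) = \<alpha> * (\<Sum>j<n. td_err \<gamma> phi w s a r j * feat phi s a j $ k)" if "k < d" for k
  proof -
    have "BR $$ (k+1, 0) = (\<Sum>j<n. (V21 * X) $$ (k+1, j) * (transpose_mat X * P12_blk d * Wc) $$ (j, 0))"
      unfolding BR_def using that V21 X P12 Wc by (simp add: scalar_prod_def row_def col_def atLeast0LessThan)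
    also have "\<dots> = (\<Sum>j<n. \<alpha> * (td_err \<gamma> phi w s a r j * feat phi s a j $ k))"
      using that by (intro sum.cong refl) (simp add: VX[simplified] Te)
    finally show ?thesis by (simp add: sum_distrib_left)
  qed
  have BRc: "BR \<in> carrier_mat (d+1) 1" unfolding BR_def using V21 X P12 Wc by auto
  define M where "M = V * H * (transpose_mat H * P * H)"
  have Mc: "M \<in> carrier_mat (3*d+2) (n+1)" unfolding M_def using V H P by auto
  have Me: "M $$ (2*d+2+k, n) = BR $$ (k+1, 0)" if "k < d" for k
    unfolding M_def M using that X Wc V11 V12 V21 V22 P11 P12 P21 BRc by simp
  have He: "H $$ (2*d+2+k, n) = w $ k" if "k < d" for k
  proof -
    have "H $$ (2*d+2+k, n) = Wc $$ (k+1, 0)" unfolding Hdef using that X Wc by simp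
    also have "\<dots> = w $ k" unfolding Wc_def wt_def using that wC by (simp add: mat_of_cols_index)
    finally show ?thesis .
  qed
  show ?thesis
    unfolding H_def[symmetric] TF_def lsa_out_def Let_def scal M_def[symmetric]
  proof (rule eq_vecI)
    fix k assume "k < dim_vec (w_sarsa d n \<alpha> \<gamma> phi w s a r)"
    hence k: "k < d" unfolding w_sarsa_def by simp
    have e: "dim_row (H + 1 / real n \<cdot>\<^sub>m M) - d + k = 2*d+2+k" "dim_col (H + 1 / real n \<cdot>\<^sub>m M) - 1 = n"
      using H Mc by auto
    show "vec d (\<lambda>k. (H + 1 / real n \<cdot>\<^sub>m M) $$ (dim_row (H + 1 / real n \<cdot>\<^sub>m M) - d + k,
              dim_col (H + 1 / real n \<cdot>\<^sub>m M) - 1)) $ k = w_sarsa d n \<alpha> \<gamma> phi w s a r $ k"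
      unfolding e using k H Mc by (simp add: He[simplified] Me[simplified] BRe[simplified] w_sarsa_def)
  qed (simp add: w_sarsa_def)
qed

end
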